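(* Let $(\mathbf A,\perp,\{\mathsf{t},\mathsf{f}\})$ be an $\mathfrak{N}_w^1$-model with $|A|>1$. Then the Dedekind–MacNeille completion $\mathbb{DM}(\mathcal{I}(\mathbf A))=(\mathrm{DM}(\mathcal{I}(\mathbf A)),\land,\lor,{}^{*},\emptyset,A)$ of the poset with antitone involution $\mathcal{I}(\mathbf A)=(A,\precsim,{}^{*})$ is not an orthomodular lattice.
   Context: A weak $\mathcal{N}$-algebra is an algebra $(A,\otimes,\circ,{}^{*})$ of type $(2,2,1)$ with $\otimes,\circ$ commutative, $x^{**}=x$, and $(x\otimes y)\circ z=(x\otimes z)\circ y$. Term operations: $x\Rightarrow y:=(x\circ y^{*})^{*}$, $x\Leftrightarrow y:=(x\Rightarrow y)\otimes(y\Rightarrow x)$, $x\not\Leftrightarrow y:=(x\Leftrightarrow y)^{*}$, $x\not\Leftrightarrow y\not\Leftrightarrow z:=((x\not\Leftrightarrow y)\otimes(x\not\Leftrightarrow z))\otimes(y\not\Leftrightarrow z)$, $x\oplus y:=(x^{*}\otimes y^{*})^{*}$. With $\mathsf{t}\ne\mathsf{f}$ symbols not in $A$, $\overline A=A\cup\{\mathsf{t},\mathsf{f}\}$, an $\mathfrak{N}_w$-model is $(\mathbf A,\perp,\{\mathsf{t},\mathsf{f}\})$, $\mathbf A$ a weak $\mathcal{N}$-algebra, $\perp\subseteq\overline A\times\overline A$, such that for all $x,y,z\in A$: (a) $x\perp x^{*}$; (b) $x\perp y^{*}$ and $y\perp x^{*}$ imply $x=y$; (c) $x\perp y$ iff $x\circ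 y\perp\mathsf{t}$; (d) $x\perp\mathsf{t}$ iff $x^{*}\perp\mathsf{f}$; (e) $x\perp\mathsf{f}$ and $y\perp\mathsf{f}$ iff $x\otimes y\perp\mathsf{f}$; (f) $(x\circ y^{*})^{*}\perp(x\circ y)^{*}$; (g) $x\perp y$ and $x\perp\mathsf{f}$ imply $y\perp\mathsf{t}$; (h) $(x\not\Leftrightarrow y\not\Leftrightarrow z)\perp((x\Rightarrow y)\Rightarrow((y\Rightarrow z)\Rightarrow(x\Rightarrow z)))^{*}$. An $\mathfrak{N}_w^1$-model is an $\mathfrak{N}_w$-model such that for all $x,y,z\in A$: $x\perp\mathsf{f}$ implies $x\oplus y\perp\mathsf{f}$; and $x\perp y^{*}$, $y\perp z^{*}$ imply $x\perp z^{*}$. On $A$, $x\precsim y$ iff $x\perp y^{*}$; $(A,\precsim,{}^{*})$ is a poset with antitone involution. For $X\subseteq A$: $L(X)=\{y: y\precsim x\ \forall x\in X\}$, $U(X)=\{y: x\precsim y\ \forall x\in X\}$, $X'=\{x^{*}:x\in X\}$. $\mathrm{DM}(\mathcal{I}(\mathbf A))=\{X\subseteq A: L(U(X))=X\}$, ordered by inclusion, with $X\land Y=X\cap Y$, $X\lor Y=L(U(X\cup Y))$, $X^{*}=L(X')$, bottom $\emptyset$ and top $A$. An ortholattice $(B,\land,\lor,{}^{*},0,1)$ is orthomodular if $x\le y$ and $x^{*}\land y=0$ imply $x=y$. *)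

theory Defs
  imports Main
begin

text \<open>The carrier A of the weak N-algebra is the whole type 'a.
  The extended carrier A \<union> {t, f} is the type 'a ext.\<close>

datatype 'a ext = El 'a | Tv | Fv

definition weak_N_algebra ::
  "('a \<Rightarrow> 'a \<Rightarrow> 'a) \<Rightarrow> ('a \<Rightarrow> 'a \<Rightarrow> 'a) \<Rightarrow> ('a \<Rightarrow> 'a) \<Rightarrow> bool" where
  "weak_N_algebra ot ci st \<longleftrightarrow>
     (\<forall>x y. ot x y = ot y x) \<and> (\<forall>x y. ci x y = ci y x) \<and> (\<forall>x. st (st x) = x) \<and>
     (\<forall>x y z. ci (ot x y) z = ci (ot x z) y)"

definition imp_op :: "('a \<Rightarrow> 'a \<Rightarrow> 'a) \<Rightarrow> ('a \<Rightarrow> 'a) \<Rightarrow> 'a \<Rightarrow> 'a \<Rightarrow> 'a" where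
  "imp_op ci st x y = st (ci x (st y))"

definition iff_op :: "('a \<Rightarrow> 'a \<Rightarrow> 'a) \<Rightarrow> ('a \<Rightarrow> 'a \<Rightarrow> 'a) \<Rightarrow> ('a \<Rightarrow> 'a) \<Rightarrow> 'a \<Rightarrow> 'a \<Rightarrow> 'a" where
  "iff_op ot ci st x y = ot (imp_op ci st x y) (imp_op ci st y x)"

definition niff_op :: "('a \<Rightarrow> 'a \<Rightarrow> 'a) \<Rightarrow> ('a \<Rightarrow> 'a \<Rightarrow> 'a) \<Rightarrow> ('a \<Rightarrow> 'a) \<Rightarrow> 'a \<Rightarrow> 'a \<Rightarrow> 'a" where
  "niff_op ot ci st x y = st (iff_op ot ci st x y)"

definition niff3_op :: "('a \<Rightarrow> 'a \<Rightarrow> 'a) \<Rightarrow> ('a \<Rightarrow> 'a \<Rightarrow> 'a) \<Rightarrow> ('a \<Rightarrow> 'a) \<Rightarrow> 'a \<Rightarrow> 'a \<Rightarrow> 'a \<Rightarrow> 'a" where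
  "niff3_op ot ci st x y z =
     ot (ot (niff_op ot ci st x y) (niff_op ot ci st x z)) (niff_op ot ci st y z)"

definition oplus_op :: "('a \<Rightarrow> 'a \<Rightarrow> 'a) \<Rightarrow> ('a \<Rightarrow> 'a) \<Rightarrow> 'a \<Rightarrow> 'a \<Rightarrow> 'a" where
  "oplus_op ot st x y = st (ot (st x) (st y))"

definition Nw_model ::
  "('a \<Rightarrow> 'a \<Rightarrow> 'a) \<Rightarrow> ('a \<Rightarrow> 'a \<Rightarrow> 'a) \<Rightarrow> ('a \<Rightarrow> 'a) \<Rightarrow> ('a ext \<Rightarrow> 'a ext \<Rightarrow> bool) \<Rightarrow> bool" where
  "Nw_model ot ci st perp \<longleftrightarrow> weak_N_algebra ot ci st \<and>
     (\<forall>x. perp (El x) (El (st x))) \<and>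
     (\<forall>x y. perp (El x) (El (st y)) \<and> perp (El y) (El (st x)) \<longrightarrow> x = y) \<and>
     (\<forall>x y. perp (El x) (El y) \<longleftrightarrow> perp (El (ci x y)) Tv) \<and>
     (\<forall>x. perp (El x) Tv \<longleftrightarrow> perp (El (st x)) Fv) \<and>
     (\<forall>x y. (perp (El x) Fv \<and> perp (El y) Fv) \<longleftrightarrow> perp (El (ot x y)) Fv) \<and>
     (\<forall>x y. perp (El (st (ci x (st y)))) (El (st (ci x y)))) \<and>
     (\<forall>x y. perp (El x) (El y) \<and> perp (El x) Fv \<longrightarrow> perp (El y) Tv) \<and>
     (\<forall>x y z. perp (El (niff3_op ot ci st x y z))
        (El (st (imp_op ci st (imp_op ci st x y)
                   (imp_op ci st (imp_op ci st y z) (imp_op ci st x z))))))"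

definition Nw1_model ::
  "('a \<Rightarrow> 'a \<Rightarrow> 'a) \<Rightarrow> ('a \<Rightarrow> 'a \<Rightarrow> 'a) \<Rightarrow> ('a \<Rightarrow> 'a) \<Rightarrow> ('a ext \<Rightarrow> 'a ext \<Rightarrow> bool) \<Rightarrow> bool" where
  "Nw1_model ot ci st perp \<longleftrightarrow> Nw_model ot ci st perp \<and>
     (\<forall>x y. perp (El x) Fv \<longrightarrow> perp (El (oplus_op ot st x y)) Fv) \<and>
     (\<forall>x y z. perp (El x) (El (st y)) \<and> perp (El y) (El (st z)) \<longrightarrow> perp (El x) (El (st z)))"

definition prec :: "('a \<Rightarrow> 'a) \<Rightarrow> ('a ext \<Rightarrow> 'a ext \<Rightarrow> bool) \<Rightarrow> 'a \<Rightarrow> 'a \<Rightarrow> bool" where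
  "prec st perp x y \<longleftrightarrow> perp (El x) (El (st y))"

definition lowb :: "('a \<Rightarrow> 'a \<Rightarrow> bool) \<Rightarrow> 'a set \<Rightarrow> 'a set" where
  "lowb le X = {y. \<forall>x\<in>X. le y x}"

definition uppb :: "('a \<Rightarrow> 'a \<Rightarrow> bool) \<Rightarrow> 'a set \<Rightarrow> 'a set" where
  "uppb le X = {y. \<forall>x\<in>X. le x y}"

definition DM_sets :: "('a \<Rightarrow> 'a \<Rightarrow> bool) \<Rightarrow> 'a set set" where
  "DM_sets le = {X. lowb le (uppb le X) = X}"

definition DM_join :: "('a \<Rightarrow> 'a \<Rightarrow> bool) \<Rightarrow> 'a set \<Rightarrow> 'a set \<Rightarrow> 'a set" where
  "DM_join le X Y = lowb le (uppb le (X \<union> Y))"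

definition DM_compl :: "('a \<Rightarrow> 'a \<Rightarrow> bool) \<Rightarrow> ('a \<Rightarrow> 'a) \<Rightarrow> 'a set \<Rightarrow> 'a set" where
  "DM_compl le st X = lowb le (st ` X)"

definition ortholattice ::
  "'b set \<Rightarrow> ('b \<Rightarrow> 'b \<Rightarrow> bool) \<Rightarrow> ('b \<Rightarrow> 'b \<Rightarrow> 'b) \<Rightarrow> ('b \<Rightarrow> 'b \<Rightarrow> 'b) \<Rightarrow> ('b \<Rightarrow> 'b)
    \<Rightarrow> 'b \<Rightarrow> 'b \<Rightarrow> bool" where
  "ortholattice B le meet join compl zr on \<longleftrightarrow>
     (\<forall>x\<in>B. le x x) \<and>
     (\<forall>x\<in>B. \<forall>y\<in>B. le x y \<and> le y x \<longrightarrow> x = y) \<and>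
     (\<forall>x\<in>B. \<forall>y\<in>B. \<forall>z\<in>B. le x y \<and> le y z \<longrightarrow> le x z) \<and>
     zr \<in> B \<and> on \<in> B \<and> (\<forall>x\<in>B. le zr x \<and> le x on) \<and>
     (\<forall>x\<in>B. \<forall>y\<in>B. meet x y \<in> B \<and> join x y \<in> B) \<and>
     (\<forall>x\<in>B. \<forall>y\<in>B. le (meet x y) x \<and> le (meet x y) y \<and>
        (\<forall>z\<in>B. le z x \<and> le z y \<longrightarrow> le z (meet x y))) \<and>
     (\<forall>x\<in>B. \<forall>y\<in>B. le x (join x y) \<and> le y (join x y) \<and>
        (\<forall>z\<in>B. le x z \<and> le y z \<longrightarrow> le (join x y) z)) \<and>
     (\<forall>x\<in>B. compl x \<in> B \<and> compl (compl x) = x \<and>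
        meet x (compl x) = zr \<and> join x (compl x) = on) \<and>
     (\<forall>x\<in>B. \<forall>y\<in>B. le x y \<longrightarrow> le (compl y) (compl x))"

definition orthomodular_lattice ::
  "'b set \<Rightarrow> ('b \<Rightarrow> 'b \<Rightarrow> bool) \<Rightarrow> ('b \<Rightarrow> 'b \<Rightarrow> 'b) \<Rightarrow> ('b \<Rightarrow> 'b \<Rightarrow> 'b) \<Rightarrow> ('b \<Rightarrow> 'b)
    \<Rightarrow> 'b \<Rightarrow> 'b \<Rightarrow> bool" where
  "orthomodular_lattice B le meet join compl zr on \<longleftrightarrow>
     ortholattice B le meet join compl zr on \<and>
     (\<forall>x\<in>B. \<forall>y\<in>B. le x y \<and> meet (compl x) y = zr \<longrightarrow> x = y)"

end

theory Submission
  imports Defs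
begin


locale nwabs =
  fixes ot ci :: "'a \<Rightarrow> 'a \<Rightarrow> 'a" and st :: "'a \<Rightarrow> 'a" and F :: "'a set"
  assumes otc: "\<And>x y. ot x y = ot y x" and cic: "\<And>x y. ci x y = ci y x"
    and sti: "\<And>x. st (st x) = x" and w: "\<And>x y z. ci (ot x y) z = ci (ot x z) y"
    and ax_a: "\<And>x. ci x (st x) \<in> F"
    and ax_b: "\<And>x y. ci x (st y) \<in> F \<Longrightarrow> ci y (st x) \<in> F \<Longrightarrow> x = y"
    and ax_e: "\<And>x y. (st x \<in> F \<and> st y \<in> F) = (st (ot x y) \<in> F)"
    and ax_f: "\<And>x y. ci (st (ci x (st y))) (st (ci x y)) \<in> F"
    and ax_g: "\<And>x y. st x \<in> F \<Longrightarrow> ci x y \<in> F \<Longrightarrow> y \<in> F"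
    and ax_o: "\<And>x y. x \<in> F \<Longrightarrow> ot x y \<in> F"
    and ax_t: "\<And>x y z. ci x (st y) \<in> F \<Longrightarrow> ci y (st z) \<in> F \<Longrightarrow> ci x (st z) \<in> F"
begin

lemma core_DF:
  assumes uv: "(u::'a) \<noteq> v" and d1: "d \<in> F" and d2: "st d \<in> F"
  shows False
proof -
  have all: "y \<in> F" for y
  proof -
    have "ot d y \<in> F" using ax_o[OF d1] .
    hence "st (st (ot d y)) \<in> F" by (simp add: sti)
    hence sp: "st (ot d (st (ot d y))) \<in> F" using ax_e d2 by blast
    have "ci (ot d y) (st (ot d y)) \<in> F" by (rule ax_a)
    hence "ci (ot d (st (ot d y))) y \<in> F" by (simp add: w)
    thus "y \<in> F" using ax_g[OF sp] by blast
  qed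
  show False using ax_b[OF all all] uv by blast
qed

lemma core_Z:
  assumes DF: "\<And>x. x \<in> F \<Longrightarrow> st x \<notin> F"
    and h1: "ci a (st b) \<in> F" and h2: "ci c a \<in> F" and h3: "ci c (st b) \<in> F"
  shows False
proof -
  have w2: "\<And>x y z. ci x (ot y z) = ci y (ot x z)"
    by (metis w cic otc)
  have L1: "\<And>x y. ci x y \<in> F \<Longrightarrow> st (ci x (st y)) \<in> F"
  proof -
    fix x y assume "ci x y \<in> F"
    hence "st (st (ci x y)) \<in> F" by (simp add: sti)
    moreover have "ci (st (ci x y)) (st (ci x (st y))) \<in> F"
      using ax_f[of x "st y"] by (simp add: sti cic)
    ultimately show "st (ci x (st y)) \<in> F" by (rule ax_g)
  qed
  have N: "\<And>x y. ci x (st y) \<in> F \<Longrightarrow> ci x y \<in> F \<Longrightarrow> False"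
    using L1 DF by blast
  have T: "\<And>x y z. ci x (st y) \<in> F \<Longrightarrow> ci y z \<in> F \<Longrightarrow> ci x z \<in> F"
    by (metis ax_t sti)
  have f166: "\<And>x y. ci x (ot y (st (ot x y))) \<in> F"
  proof -
    fix x y
    have "ci (ot y x) (st (ot x y)) \<in> F" using ax_a[of "ot x y"] by (simp add: otc)
    hence "ci (ot y (st (ot x y))) x \<in> F" by (simp add: w)
    thus "ci x (ot y (st (ot x y))) \<in> F" by (simp add: cic)
  qed
  have f204: "\<And>x y. ci x (ot y (st (ot y x))) \<in> F"
    using f166 otc by metis
  have f5177: "\<And>X. ci a (ot X (st (ot b X))) \<in> F"
    using T[OF h1] f166 by blast
  have f5980: "\<And>X. ci X (ot a (st (ot b X))) \<in> F"
    by (metis f5177 w2 otc)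
  have f6405: "\<And>X. ci X (ot a (st (ot b (st X)))) \<notin> F"
  proof
    fix X assume A: "ci X (ot a (st (ot b (st X)))) \<in> F"
    have "ci (st X) (ot a (st (ot b (st X)))) \<in> F" using f5980 by blast
    thus False using A N cic by metis
  qed
  have f5200: "\<And>X. ci b X \<in> F \<Longrightarrow> ci c X \<in> F"
    using T[OF h3] by blast
  have f11861: "ci b (ot a (st (ot b (st c)))) \<notin> F"
    using f6405 f5200 by blast
  have f11909: "ci a (ot b (st (ot b (st c)))) \<notin> F"
    by (metis f11861 w2 otc)
  have "ci a (st (st c)) \<notin> F"
    using T f204 f11909 by blast
  thus False using h2 sti cic by metis
qed

lemma core_main:
  assumes uv: "(u::'a) \<noteq> v"
    and OM: "\<And>a b. ci a (st b) \<in> F \<Longrightarrow> (\<And>c. ci c a \<in> F \<Longrightarrow> ci c (st b) \<in> F \<Longrightarrow> False)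
               \<Longrightarrow> ci b (st a) \<in> F"
  shows False
proof -
  have DF: "\<And>x. x \<in> F \<Longrightarrow> st x \<notin> F"
    using core_DF[OF uv] by blast
  define f0 where "f0 = ci u (st u)"
  have f0F: "f0 \<in> F" unfolding f0_def by (rule ax_a)
  have allst: "st y \<in> F" for y
  proof -
    define z where "z = st (ot f0 y)"
    define a' where "a' = ot f0 z"
    have "ci (ot f0 y) z \<in> F" unfolding z_def by (rule ax_a)
    hence "ci a' y \<in> F" unfolding a'_def by (simp add: w)
    hence h1: "ci a' (st (st y)) \<in> F" by (simp add: sti)
    have "ci (st y) (st a') \<in> F"
    proof (rule OM[OF h1])
      fix c assume "ci c a' \<in> F" "ci c (st (st y)) \<in> F"
      thus False using core_Z[OF DF h1] by blast
    qed
    moreover have "a' \<in> F" unfolding a'_def by (rule ax_o[OF f0F])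
    hence "st (st a') \<in> F" by (simp add: sti)
    ultimately show "st y \<in> F" using ax_g cic by metis
  qed
  have "st (st u) \<in> F" by (rule allst)
  hence "u \<in> F" by (simp add: sti)
  thus False using DF allst[of u] by blast
qed

end

theorem corollary6p19:
  fixes ot ci :: "'a \<Rightarrow> 'a \<Rightarrow> 'a" and st :: "'a \<Rightarrow> 'a"
    and perp :: "'a ext \<Rightarrow> 'a ext \<Rightarrow> bool"
  assumes "Nw1_model ot ci st perp"
    and "\<exists>x y :: 'a. x \<noteq> y"
  shows "\<not> orthomodular_lattice (DM_sets (prec st perp)) (\<subseteq>) (\<inter>)
            (DM_join (prec st perp)) (DM_compl (prec st perp) st) {} (UNIV :: 'a set)"
proof
  assume OML: "orthomodular_lattice (DM_sets (prec st perp)) (\<subseteq>) (\<inter>)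
            (DM_join (prec st perp)) (DM_compl (prec st perp) st) {} (UNIV :: 'a set)"
  from assms(2) obtain u v :: 'a where uv: "u \<noteq> v" by blast
  define F where "F = {x. perp (El x) Tv}"
  note D1 = assms(1)[unfolded Nw1_model_def]
  have nw1: "Nw_model ot ci st perp" using D1[THEN conjunct1] .
  have p_o0: "\<forall>x y. perp (El x) Fv \<longrightarrow> perp (El (oplus_op ot st x y)) Fv" using D1[THEN conjunct2, THEN conjunct1] .
  have p_t0: "\<forall>x y z. perp (El x) (El (st y)) \<and> perp (El y) (El (st z)) \<longrightarrow> perp (El x) (El (st z))" using D1[THEN conjunct2, THEN conjunct2] .
  note D2 = nw1[unfolded Nw_model_def]
  have M: "weak_N_algebra ot ci st" using D2[THEN conjunct1] .
  have p_a0: "\<forall>x. perp (El x) (El (st x))" using D2[THEN conjunct2, THEN conjunct1] .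
  have p_b0: "\<forall>x y. perp (El x) (El (st y)) \<and> perp (El y) (El (st x)) \<longrightarrow> x = y" using D2[THEN conjunct2, THEN conjunct2, THEN conjunct1] .
  have p_c0: "\<forall>x y. perp (El x) (El y) \<longleftrightarrow> perp (El (ci x y)) Tv" using D2[THEN conjunct2, THEN conjunct2, THEN conjunct2, THEN conjunct1] .
  have p_d0: "\<forall>x. perp (El x) Tv \<longleftrightarrow> perp (El (st x)) Fv" using D2[THEN conjunct2, THEN conjunct2, THEN conjunct2, THEN conjunct2, THEN conjunct1] .
  have p_e0: "\<forall>x y. (perp (El x) Fv \<and> perp (El y) Fv) \<longleftrightarrow> perp (El (ot x y)) Fv" using D2[THEN conjunct2, THEN conjunct2, THEN conjunct2, THEN conjunct2, THEN conjunct2, THEN conjunct1] .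
  have p_f0: "\<forall>x y. perp (El (st (ci x (st y)))) (El (st (ci x y)))" using D2[THEN conjunct2, THEN conjunct2, THEN conjunct2, THEN conjunct2, THEN conjunct2, THEN conjunct2, THEN conjunct1] .
  have p_g0: "\<forall>x y. perp (El x) (El y) \<and> perp (El x) Fv \<longrightarrow> perp (El y) Tv" using D2[THEN conjunct2, THEN conjunct2, THEN conjunct2, THEN conjunct2, THEN conjunct2, THEN conjunct2, THEN conjunct2, THEN conjunct1] .
  have p_a: "\<And>x. perp (El x) (El (st x))" using p_a0 by blast
  have p_b: "\<And>x y. perp (El x) (El (st y)) \<and> perp (El y) (El (st x)) \<longrightarrow> x = y" using p_b0 by blast
  have p_c: "\<And>x y. perp (El x) (El y) \<longleftrightarrow> perp (El (ci x y)) Tv" using p_c0 by blast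
  have p_d: "\<And>x. perp (El x) Tv \<longleftrightarrow> perp (El (st x)) Fv" using p_d0 by blast
  have p_e: "\<And>x y. (perp (El x) Fv \<and> perp (El y) Fv) \<longleftrightarrow> perp (El (ot x y)) Fv" using p_e0 by blast
  have p_f: "\<And>x y. perp (El (st (ci x (st y)))) (El (st (ci x y)))" using p_f0 by blast
  have p_g: "\<And>x y. perp (El x) (El y) \<and> perp (El x) Fv \<longrightarrow> perp (El y) Tv" using p_g0 by blast
  have p_o: "\<And>x y. perp (El x) Fv \<longrightarrow> perp (El (oplus_op ot st x y)) Fv" using p_o0 by blast
  have p_t: "\<And>x y z. perp (El x) (El (st y)) \<and> perp (El y) (El (st z)) \<longrightarrow> perp (El x) (El (st z))" using p_t0 by blast
  have otc: "\<And>x y. ot x y = ot y x" and cic: "\<And>x y. ci x y = ci y x"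
    and sti: "\<And>x. st (st x) = x" and w: "\<And>x y z. ci (ot x y) z = ci (ot x z) y"
    using M unfolding weak_N_algebra_def by blast+
  have cF: "\<And>x y. perp (El x) (El y) \<longleftrightarrow> ci x y \<in> F" using p_c unfolding F_def by simp
  have dF: "\<And>x. perp (El x) Fv \<longleftrightarrow> st x \<in> F"
    using p_d[of "st _"] unfolding F_def by (simp add: sti)
  interpret L: nwabs ot ci st F
  proof
    show "\<And>x y. ot x y = ot y x" by (rule otc)
    show "\<And>x y. ci x y = ci y x" by (rule cic)
    show "\<And>x. st (st x) = x" by (rule sti)
    show "\<And>x y z. ci (ot x y) z = ci (ot x z) y" by (rule w)
    show "\<And>x. ci x (st x) \<in> F" using p_a cF by blast
    show "\<And>x y. ci x (st y) \<in> F \<Longrightarrow> ci y (st x) \<in> F \<Longrightarrow> x = y" using p_b cF by blast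
    show "\<And>x y. (st x \<in> F \<and> st y \<in> F) = (st (ot x y) \<in> F)" using p_e dF by blast
    show "\<And>x y. ci (st (ci x (st y))) (st (ci x y)) \<in> F" using p_f cF by blast
    show "\<And>x y. st x \<in> F \<Longrightarrow> ci x y \<in> F \<Longrightarrow> y \<in> F"
      using p_g cF dF unfolding F_def by blast
    show "\<And>x y. x \<in> F \<Longrightarrow> ot x y \<in> F"
    proof -
      fix x y assume "x \<in> F"
      hence "perp (El (st x)) Fv" using dF[of "st x"] by (simp add: sti)
      hence "perp (El (oplus_op ot st (st x) (st y))) Fv" using p_o by blast
      hence "st (oplus_op ot st (st x) (st y)) \<in> F" using dF by blast
      thus "ot x y \<in> F" by (simp add: oplus_op_def sti)
    qed
    show "\<And>x y z. ci x (st y) \<in> F \<Longrightarrow> ci y (st z) \<in> F \<Longrightarrow> ci x (st z) \<in> F"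
      using p_t cF by blast
  qed
  let ?le = "prec st perp"
  have le: "\<And>x y. ?le x y \<longleftrightarrow> ci x (st y) \<in> F" unfolding prec_def using cF by blast
  define P where "P a = lowb ?le {a}" for a
  have Pm: "\<And>a y. y \<in> P a \<longleftrightarrow> ci y (st a) \<in> F" unfolding P_def lowb_def using le by simp
  have refl: "\<And>a. a \<in> P a" using Pm L.ax_a by blast
  have PDM: "P a \<in> DM_sets ?le" for a
  proof -
    have "lowb ?le (uppb ?le (P a)) = P a"
    proof
      show "lowb ?le (uppb ?le (P a)) \<subseteq> P a"
      proof
        fix z assume z: "z \<in> lowb ?le (uppb ?le (P a))"
        have "a \<in> uppb ?le (P a)" unfolding uppb_def P_def lowb_def by simp
        hence "?le z a" using z unfolding lowb_def by blast
        thus "z \<in> P a" unfolding P_def lowb_def by simp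
      qed
      show "P a \<subseteq> lowb ?le (uppb ?le (P a))"
        unfolding lowb_def uppb_def by blast
    qed
    thus ?thesis unfolding DM_sets_def by simp
  qed
  have OMc: "\<forall>x\<in>DM_sets ?le. \<forall>y\<in>DM_sets ?le. x \<subseteq> y \<and> DM_compl ?le st x \<inter> y = {} \<longrightarrow> x = y"
    using OML unfolding orthomodular_lattice_def by blast
  have OM: "ci b (st a) \<in> F"
    if h: "ci a (st b) \<in> F" and nc: "\<And>c. ci c a \<in> F \<Longrightarrow> ci c (st b) \<in> F \<Longrightarrow> False" for a b
  proof -
    have sub: "P a \<subseteq> P b"
    proof
      fix y assume "y \<in> P a"
      hence "ci y (st a) \<in> F" using Pm by blast
      thus "y \<in> P b" using L.ax_t h Pm by blast
    qed
    have disj: "DM_compl ?le st (P a) \<inter> P b = {}"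
    proof (rule ccontr)
      assume "DM_compl ?le st (P a) \<inter> P b \<noteq> {}"
      then obtain c where c1: "c \<in> DM_compl ?le st (P a)" and c2: "c \<in> P b" by blast
      have "?le c (st a)" using c1 refl unfolding DM_compl_def lowb_def by blast
      hence "ci c a \<in> F" using le sti by metis
      moreover have "ci c (st b) \<in> F" using c2 Pm by blast
      ultimately show False using nc by blast
    qed
    have "P a = P b" using OMc PDM sub disj by blast
    hence "b \<in> P a" using refl by blast
    thus ?thesis using Pm by blast
  qed
  show False using L.core_main[OF uv] OM by blast
qed

end
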